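(* Let $l,n$ be positive integers, $\mathbf{x}_1,\dots,\mathbf{x}_l\in\mathbb{R}^n$, $y_1,\dots,y_l\in\mathbb{R}$, $a_1,\dots,a_l,b_1,\dots,b_l\in\mathbb{R}$. Let $\varphi:\mathbb{R}\to[0,\infty)$ be nonconstant, continuous and sublinear, with $\varphi^*=\iota_{[\alpha,\beta]}$, $\alpha<\beta$. Let $\mathbf Z\in\mathbb{R}^{l\times n}$ have $i$-th row $a_i\mathbf x_i^T$, $\bar{\mathbf y}=(b_1y_1,\dots,b_ly_l)^T$, and for $C>0$ let $\theta^*(C)$ denote an optimal solution of the dual problem $$\min_{\theta\in[\alpha,\beta]^l}\ \tfrac{C}{2}\|\mathbf Z^T\theta\|^2-\langle\bar{\mathbf y},\theta\rangle.$$ Suppose $\theta^*(C_0)$ is given for some $C_0>0$, and let $C>C_0$. If for some index $i$ $$\tfrac{C+C_0}{2}\langle\mathbf Z^T\theta^*(C_0),a_i\mathbf x_i\rangle-\tfrac{C-C_0}{2}\|\mathbf Z^T\theta^*(C_0)\|\,\|a_i\mathbf x_i\|>b_iy_i,$$ then $[\theta^*(C)]_i=\alpha$, i.e., $i\in\mathcal R$. Similarly, if $$\tfrac{C+C_0}{2}\langle\mathbf Z^T\theta^*(C_0),a_i\mathbf x_i\rangle+\tfrac{C-C_0}{2}\|\mathbf Z^T\theta^*(C_0)\|\,\|a_i\mathbf x_i\|<b_iy_i,$$ then $[\theta^*(C)]_i=\beta$, i.e., $i\in\mathcal L$.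
   Context: This dual corresponds to the primal problem $\min_{\mathbf w\in\mathbb{R}^n}\frac12\|\mathbf w\|^2+C\sum_{i=1}^l\varphi(\mathbf w^T(a_i\mathbf x_i)+b_iy_i)$, whose unique optimal solution $\mathbf w^*(C)$ satisfies $\mathbf w^*(C)=-C\mathbf Z^T\theta^*(C)$. Sublinear means convex and $\varphi(tx)=t\varphi(x)$ for $t>0$; $\varphi^*(s)=\sup_t(st-\varphi(t))$ and $\iota_{[\alpha,\beta]}$ is $0$ on $[\alpha,\beta]$ and $+\infty$ elsewhere. The index sets are $\mathcal R=\{i:-\langle\mathbf w^*(C),a_i\mathbf x_i\rangle>b_iy_i\}$ and $\mathcal L=\{i:-\langle\mathbf w^*(C),a_i\mathbf x_i\rangle<b_iy_i\}$. *)

theory Defs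
  imports "HOL-Analysis.Analysis"
begin

text \<open>Data: index type 'l (l = CARD('l) samples), feature space real^'n.
  Vectors theta in R^l are represented as real^'l.\<close>

definition sublinear :: "(real \<Rightarrow> real) \<Rightarrow> bool" where
  "sublinear \<phi> \<longleftrightarrow> convex_on UNIV \<phi> \<and> (\<forall>t>0. \<forall>x. \<phi> (t * x) = t * \<phi> x)"

definition conj_fun :: "(real \<Rightarrow> real) \<Rightarrow> real \<Rightarrow> ereal" where
  "conj_fun \<phi> s = (SUP t. ereal (s * t - \<phi> t))"

definition indicator_interval :: "real \<Rightarrow> real \<Rightarrow> real \<Rightarrow> ereal" where
  "indicator_interval \<alpha> \<beta> s = (if \<alpha> \<le> s \<and> s \<le> \<beta> then 0 else \<infinity>)"

text \<open>Z^T theta, where the i-th row of Z is a_i x_i^T.\<close>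
definition ZT :: "('l::finite \<Rightarrow> real) \<Rightarrow> ('l \<Rightarrow> real^'n) \<Rightarrow> real^'l \<Rightarrow> real^'n" where
  "ZT a x \<theta> = (\<Sum>i\<in>UNIV. (\<theta> $ i) *\<^sub>R (a i *\<^sub>R x i))"

definition dual_obj :: "real \<Rightarrow> ('l::finite \<Rightarrow> real) \<Rightarrow> ('l \<Rightarrow> real) \<Rightarrow> ('l \<Rightarrow> real^'n)
    \<Rightarrow> ('l \<Rightarrow> real) \<Rightarrow> real^'l \<Rightarrow> real" where
  "dual_obj C a b x y \<theta> = C / 2 * (norm (ZT a x \<theta>))\<^sup>2 - (\<Sum>i\<in>UNIV. (b i * y i) * \<theta> $ i)"

definition box_set :: "real \<Rightarrow> real \<Rightarrow> (real^'l::finite) set" where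
  "box_set \<alpha> \<beta> = {\<theta>. \<forall>i. \<alpha> \<le> \<theta> $ i \<and> \<theta> $ i \<le> \<beta>}"

definition dual_optimal :: "real \<Rightarrow> real \<Rightarrow> real \<Rightarrow> ('l::finite \<Rightarrow> real) \<Rightarrow> ('l \<Rightarrow> real)
    \<Rightarrow> ('l \<Rightarrow> real^'n) \<Rightarrow> ('l \<Rightarrow> real) \<Rightarrow> real^'l \<Rightarrow> bool" where
  "dual_optimal \<alpha> \<beta> C a b x y \<theta> \<longleftrightarrow> \<theta> \<in> box_set \<alpha> \<beta> \<and>
     (\<forall>\<theta>'\<in>box_set \<alpha> \<beta>. dual_obj C a b x y \<theta> \<le> dual_obj C a b x y \<theta>')"

end

theory Submission
  imports Defs
begin

lemma ZT_add: "ZT a x (p + q) = ZT a x p + ZT a x q"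
  unfolding ZT_def vector_add_component scaleR_add_left sum.distrib ..
lemma ZT_diff: "ZT a x (p - q) = ZT a x p - ZT a x q"
  unfolding ZT_def vector_minus_component scaleR_diff_left sum_subtractf ..
lemma ZT_scale: "ZT a x (c *\<^sub>R p) = c *\<^sub>R ZT a x p"
  by (simp add: ZT_def scaleR_sum_right mult.assoc)
lemma ZT_axis: "ZT a x (axis i 1) = a i *\<^sub>R x i"
proof -
  have "(\<lambda>j. (axis i 1 $ j * a j) *\<^sub>R x j) = (\<lambda>j. if j = i then a i *\<^sub>R x i else 0)"
    by (auto simp: axis_def)
  thus ?thesis unfolding ZT_def scaleR_scaleR by (simp only:) simp
qed

lemma small_t:
  fixes L Q :: real
  assumes "Q \<ge> 0" "\<forall>t. 0 < t \<and> t \<le> 1 \<longrightarrow> t * L + t^2 * Q \<ge> 0"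
  shows "L \<ge> 0"
proof (rule ccontr)
  assume "\<not> L \<ge> 0"
  hence L: "L < 0" by simp
  define t where "t = min 1 (-L/(Q+1))"
  have t0: "t > 0" using L assms(1) by (simp add: t_def divide_neg_pos)
  have t1: "t \<le> 1" by (simp add: t_def)
  have "t * Q \<le> (-L/(Q+1)) * Q" using assms(1) by (rule mult_right_mono[rotated]) (simp add: t_def)
  also have "\<dots> < -L" using L assms(1) by (simp add: field_simps)
  finally have "L + t * Q < 0" by simp
  hence "t * (L + t*Q) < 0" using t0 by (simp add: mult_pos_neg)
  hence "t * L + t^2 * Q < 0" by (simp add: algebra_simps power2_eq_square)
  with assms(2) t0 t1 show False by force
qed

lemma vi:
  assumes opt: "dual_optimal \<alpha> \<beta> C a b x y \<theta>" and th': "\<theta>' \<in> box_set \<alpha> \<beta>" and C: "C \<ge> 0"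
  shows "C * (ZT a x \<theta> \<bullet> ZT a x (\<theta>' - \<theta>)) - (\<Sum>i\<in>UNIV. (b i * y i) * (\<theta>' - \<theta>) $ i) \<ge> 0"
proof -
  define d where "d = \<theta>' - \<theta>"
  define L where "L = C * (ZT a x \<theta> \<bullet> ZT a x d) - (\<Sum>i\<in>UNIV. (b i * y i) * d $ i)"
  define Q where "Q = C/2 * (norm (ZT a x d))^2"
  have box: "\<theta> \<in> box_set \<alpha> \<beta>" using opt by (simp add: dual_optimal_def)
  have "\<forall>t. 0 < t \<and> t \<le> 1 \<longrightarrow> t * L + t^2 * Q \<ge> 0"
  proof (intro allI impI)
    fix t :: real assume t: "0 < t \<and> t \<le> 1"
    have inb: "\<theta> + t *\<^sub>R d \<in> box_set \<alpha> \<beta>"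
    proof -
      { fix j
        have e: "(\<theta> + t *\<^sub>R d) $ j = (1 - t) * \<theta> $ j + t * \<theta>' $ j"
          by (simp add: d_def algebra_simps)
        have "\<alpha> \<le> \<theta> $ j" "\<theta> $ j \<le> \<beta>" "\<alpha> \<le> \<theta>' $ j" "\<theta>' $ j \<le> \<beta>"
          using box th' by (auto simp: box_set_def)
        hence "\<alpha> \<le> (1 - t) * \<theta> $ j + t * \<theta>' $ j \<and> (1 - t) * \<theta> $ j + t * \<theta>' $ j \<le> \<beta>"
        proof -
          have t': "0 \<le> 1 - t" "0 \<le> t" using t by auto
          have "(1-t)*\<alpha> \<le> (1-t)*\<theta> $ j" "t*\<alpha> \<le> t*\<theta>' $ j"
               "(1-t)*\<theta> $ j \<le> (1-t)*\<beta>" "t*\<theta>' $ j \<le> t*\<beta>"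
            using t' \<open>\<alpha> \<le> \<theta> $ j\<close> \<open>\<theta> $ j \<le> \<beta>\<close> \<open>\<alpha> \<le> \<theta>' $ j\<close> \<open>\<theta>' $ j \<le> \<beta>\<close>
            by (auto intro: mult_left_mono)
          thus ?thesis by (simp add: algebra_simps)
        qed
        hence "\<alpha> \<le> (\<theta> + t *\<^sub>R d) $ j \<and> (\<theta> + t *\<^sub>R d) $ j \<le> \<beta>" using e by simp }
      thus ?thesis by (simp add: box_set_def)
    qed
    hence "dual_obj C a b x y \<theta> \<le> dual_obj C a b x y (\<theta> + t *\<^sub>R d)"
      using opt by (simp add: dual_optimal_def)
    moreover have "dual_obj C a b x y (\<theta> + t *\<^sub>R d) = dual_obj C a b x y \<theta> + (t * L + t^2 * Q)"
    proof -
      have n: "(norm (ZT a x \<theta> + t *\<^sub>R ZT a x d))\<^sup>2 = (norm (ZT a x \<theta>))\<^sup>2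
          + 2 * t * (ZT a x \<theta> \<bullet> ZT a x d) + t^2 * (norm (ZT a x d))\<^sup>2"
        unfolding power2_norm_eq_inner by (simp add: inner_add_left inner_add_right inner_commute
              power2_eq_square algebra_simps)
      have s: "(\<Sum>i\<in>UNIV. (b i * y i) * (\<theta> + t *\<^sub>R d) $ i) =
          (\<Sum>i\<in>UNIV. (b i * y i) * \<theta> $ i) + t * (\<Sum>i\<in>UNIV. (b i * y i) * d $ i)"
        by (simp add: algebra_simps sum.distrib sum_distrib_left)
      show ?thesis unfolding dual_obj_def ZT_add ZT_scale n s L_def Q_def
        by (simp add: algebra_simps power2_eq_square)
    qed
    ultimately show "t * L + t^2 * Q \<ge> 0" by simp
  qed
  moreover have "Q \<ge> 0" using C by (simp add: Q_def)
  ultimately have "L \<ge> 0" using small_t by blast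
  thus ?thesis by (simp add: L_def d_def)
qed

lemma sum_axis: "(\<Sum>j\<in>UNIV. (c j :: real) * (s *\<^sub>R axis i 1) $ j) = s * c i"
  by (simp add: axis_def if_distrib cong: if_cong)

theorem theorem3:
  fixes x :: "'l::finite \<Rightarrow> real^'n"
    and y a b :: "'l \<Rightarrow> real"
    and \<phi> :: "real \<Rightarrow> real"
    and \<alpha> \<beta> C0 C :: real
    and \<theta>0 \<theta>C :: "real^'l"
    and i :: 'l
  assumes phi_nonneg: "\<forall>t. \<phi> t \<ge> 0"
    and phi_nonconst: "\<exists>s t. \<phi> s \<noteq> \<phi> t"
    and phi_cont: "continuous_on UNIV \<phi>"
    and phi_sublin: "sublinear \<phi>"
    and phi_conj: "\<forall>s. conj_fun \<phi> s = indicator_interval \<alpha> \<beta> s"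
    and ab: "\<alpha> < \<beta>"
    and C0pos: "C0 > 0"
    and CC0: "C > C0"
    and opt0: "dual_optimal \<alpha> \<beta> C0 a b x y \<theta>0"
    and optC: "dual_optimal \<alpha> \<beta> C a b x y \<theta>C"
  shows "((C + C0) / 2 * (ZT a x \<theta>0 \<bullet> (a i *\<^sub>R x i))
            - (C - C0) / 2 * norm (ZT a x \<theta>0) * norm (a i *\<^sub>R x i) > b i * y i
          \<longrightarrow> \<theta>C $ i = \<alpha> \<and> - ((- C *\<^sub>R ZT a x \<theta>C) \<bullet> (a i *\<^sub>R x i)) > b i * y i)
       \<and> ((C + C0) / 2 * (ZT a x \<theta>0 \<bullet> (a i *\<^sub>R x i))
            + (C - C0) / 2 * norm (ZT a x \<theta>0) * norm (a i *\<^sub>R x i) < b i * y i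
          \<longrightarrow> \<theta>C $ i = \<beta> \<and> - ((- C *\<^sub>R ZT a x \<theta>C) \<bullet> (a i *\<^sub>R x i)) < b i * y i)"
proof -
  define u0 where "u0 = ZT a x \<theta>0"
  define uC where "uC = ZT a x \<theta>C"
  define z where "z = a i *\<^sub>R x i"
  define v where "v = C *\<^sub>R uC"
  define cc where "cc = ((C + C0) / 2) *\<^sub>R u0"
  define r where "r = (C - C0) / 2 * norm u0"
  have bC: "\<theta>C \<in> box_set \<alpha> \<beta>" and b0: "\<theta>0 \<in> box_set \<alpha> \<beta>"
    using opt0 optC by (auto simp: dual_optimal_def)
  have v1: "C * (uC \<bullet> (u0 - uC)) - (\<Sum>j\<in>UNIV. (b j * y j) * (\<theta>0 - \<theta>C) $ j) \<ge> 0"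
    using vi[OF optC b0] CC0 C0pos by (simp add: uC_def u0_def ZT_diff)
  have v2: "C0 * (u0 \<bullet> (uC - u0)) - (\<Sum>j\<in>UNIV. (b j * y j) * (\<theta>C - \<theta>0) $ j) \<ge> 0"
    using vi[OF opt0 bC] C0pos by (simp add: uC_def u0_def ZT_diff)
  have ssum: "(\<Sum>j\<in>UNIV. (b j * y j) * (\<theta>0 - \<theta>C) $ j) = - (\<Sum>j\<in>UNIV. (b j * y j) * (\<theta>C - \<theta>0) $ j)"
    by (simp add: algebra_simps sum_negf[symmetric])
  have key: "C * (uC \<bullet> (u0 - uC)) + C0 * (u0 \<bullet> (uC - u0)) \<ge> 0"
    using v1 v2 ssum by linarith
  have ball: "(norm (v - cc))^2 \<le> r^2"
  proof -
    have e1: "(norm (v - cc))^2 = C^2 * (uC \<bullet> uC) - C * (C + C0) * (uC \<bullet> u0) + ((C+C0)/2)^2 * (u0 \<bullet> u0)"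
      unfolding power2_norm_eq_inner by (simp add: v_def cc_def inner_diff_left inner_diff_right inner_commute
          power2_eq_square field_simps)
    have e2: "r^2 = ((C - C0)/2)^2 * (u0 \<bullet> u0)"
      unfolding r_def power_mult_distrib power2_norm_eq_inner[symmetric] by simp
    have e3: "C * (uC \<bullet> uC) - (C + C0) * (uC \<bullet> u0) + C0 * (u0 \<bullet> u0) \<le> 0"
        using key by (simp add: inner_diff_right inner_commute algebra_simps)
    hence e4: "C * (C * (uC \<bullet> uC) - (C + C0) * (uC \<bullet> u0) + C0 * (u0 \<bullet> u0)) \<le> 0"
      using CC0 C0pos by (simp add: mult_nonneg_nonpos)
    have id: "((C+C0)/2)^2 = ((C-C0)/2)^2 + C*C0" by (simp add: power2_eq_square field_simps)
    have "(norm (v - cc))^2 - r^2 = C * (C * (uC \<bullet> uC) - (C + C0) * (uC \<bullet> u0) + C0 * (u0 \<bullet> u0))"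
      unfolding e1 e2 id by (simp add: power2_eq_square algebra_simps)
    thus ?thesis using e4 by linarith
  qed
  have rnn: "r \<ge> 0" using CC0 by (simp add: r_def)
  have nb: "norm (v - cc) \<le> r" using ball rnn by (simp add: power2_le_iff_abs_le)
  have cs: "\<bar>(v - cc) \<bullet> z\<bar> \<le> r * norm z"
    using Cauchy_Schwarz_ineq2[of "v - cc" z] nb
    by (meson mult_right_mono norm_ge_zero order_trans)
  have lo: "v \<bullet> z \<ge> cc \<bullet> z - r * norm z" and hi: "v \<bullet> z \<le> cc \<bullet> z + r * norm z"
    using cs by (auto simp: inner_diff_left abs_le_iff)
  have cz: "cc \<bullet> z = (C + C0) / 2 * (u0 \<bullet> z)" by (simp add: cc_def)
  have goal_lhs: "- ((- C *\<^sub>R ZT a x \<theta>C) \<bullet> (a i *\<^sub>R x i)) = v \<bullet> z"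
    by (simp add: v_def uC_def z_def)
  have coord: "(s - \<theta>C $ i) * (v \<bullet> z - b i * y i) \<ge> 0" if s: "\<alpha> \<le> s" "s \<le> \<beta>" for s
  proof -
    define \<theta>' where "\<theta>' = \<theta>C + (s - \<theta>C $ i) *\<^sub>R axis i 1"
    have "\<theta>' \<in> box_set \<alpha> \<beta>" using bC s
      by (auto simp: box_set_def \<theta>'_def axis_def)
    from vi[OF optC this] CC0 C0pos
    have "C * (uC \<bullet> ZT a x ((s - \<theta>C $ i) *\<^sub>R axis i 1))
       - (\<Sum>j\<in>UNIV. (b j * y j) * ((s - \<theta>C $ i) *\<^sub>R axis i 1) $ j) \<ge> 0"
      by (simp add: \<theta>'_def uC_def)
    thus ?thesis unfolding ZT_scale ZT_axis sum_axis
      by (simp add: v_def z_def algebra_simps)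
  qed
  have bnd: "\<alpha> \<le> \<theta>C $ i" "\<theta>C $ i \<le> \<beta>" using bC by (auto simp: box_set_def)
  show ?thesis
  proof (intro conjI impI)
    assume h: "(C + C0) / 2 * (ZT a x \<theta>0 \<bullet> (a i *\<^sub>R x i))
            - (C - C0) / 2 * norm (ZT a x \<theta>0) * norm (a i *\<^sub>R x i) > b i * y i"
    have g: "v \<bullet> z > b i * y i" using h lo cz unfolding u0_def[symmetric] z_def[symmetric] r_def[symmetric] by linarith
    thus "- ((- C *\<^sub>R ZT a x \<theta>C) \<bullet> (a i *\<^sub>R x i)) > b i * y i" using goal_lhs by simp
    have "(\<alpha> - \<theta>C $ i) * (v \<bullet> z - b i * y i) \<ge> 0" using coord ab by simp
    hence "\<alpha> - \<theta>C $ i \<ge> 0" using g by (simp add: zero_le_mult_iff)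
    thus "\<theta>C $ i = \<alpha>" using bnd by simp
  next
    assume h: "(C + C0) / 2 * (ZT a x \<theta>0 \<bullet> (a i *\<^sub>R x i))
            + (C - C0) / 2 * norm (ZT a x \<theta>0) * norm (a i *\<^sub>R x i) < b i * y i"
    have g: "v \<bullet> z < b i * y i" using h hi cz unfolding u0_def[symmetric] z_def[symmetric] r_def[symmetric] by linarith
    thus "- ((- C *\<^sub>R ZT a x \<theta>C) \<bullet> (a i *\<^sub>R x i)) < b i * y i" using goal_lhs by simp
    have "(\<beta> - \<theta>C $ i) * (v \<bullet> z - b i * y i) \<ge> 0" using coord ab by simp
    hence "\<beta> - \<theta>C $ i \<le> 0" using g by (simp add: zero_le_mult_iff)
    thus "\<theta>C $ i = \<beta>" using bnd by simp
  qed
qed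

end
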